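(* For every $n\ge 2$, $b^*_{1,n-1}\le c_n-\frac{c_n(1-2c_n)}{n}$.
   Context: A graph on $N$ vertices is even-degenerate if there is an ordering $v_1,\dots,v_N$ of its vertices such that for each $1\le i\le N-2$, $v_i$ has an even number of neighbours in $\{v_{i+1},\dots,v_N\}$. $c_n$ is the probability that $G(n,1/2)$ is not even-degenerate. Given fixed vertex sets $V,V'$ with $|V|=|V'|=m+s$ and $S\subseteq V\cap V'$ with $|S|=s$, a pair of random graphs $(G,G')$ is parity-linked on $S$ if it is distributed as a pair of independent $G\sim G(V,1/2)$, $G'\sim G(V',1/2)$ conditioned on the events $G[S]=G'[S]$ and $e(G)\equiv e(G')\pmod 2$. Then $b^*_{m,s}$ denotes the probability that both $G$ and $G'$ are not even-degenerate (this depends only on $m$ and $s$). *)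

theory Defs
  imports Complex_Main
begin

definition graphs_on :: "'a set \<Rightarrow> 'a set set set" where
  "graphs_on V = Pow {e. e \<subseteq> V \<and> card e = 2}"

text \<open>Even-degenerate: an ordering v_0,...,v_{N-1} of V (0-indexed) such that for each
  i with i+2 < N (i.e. 1 \<le> i+1 \<le> N-2 in 1-indexed terms), v_i has an even number of
  neighbours among the later vertices.\<close>
definition even_degenerate :: "'a set \<Rightarrow> 'a set set \<Rightarrow> bool" where
  "even_degenerate V E \<longleftrightarrow>
     (\<exists>vs. distinct vs \<and> set vs = V \<and>
        (\<forall>i. i + 2 < length vs \<longrightarrow>
           even (card {j. i < j \<and> j < length vs \<and> {vs ! i, vs ! j} \<in> E})))"

text \<open>c_n: probability that G(n,1/2) (uniform over graphs on n labelled vertices) is not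
  even-degenerate.\<close>
definition c_prob :: "nat \<Rightarrow> real" where
  "c_prob n = real (card {E \<in> graphs_on {..<n}. \<not> even_degenerate {..<n} E})
              / real (card (graphs_on {..<n}))"

definition induced :: "'a set set \<Rightarrow> 'a set \<Rightarrow> 'a set set" where
  "induced E S = {e \<in> E. e \<subseteq> S}"

text \<open>Sample space of the parity-linked pair: independent uniform graphs on V and V',
  conditioned on G[S] = G'[S] and e(G) \<equiv> e(G') mod 2 (uniform on this set).\<close>
definition parity_linked_space :: "'a set \<Rightarrow> 'a set \<Rightarrow> 'a set \<Rightarrow> ('a set set \<times> 'a set set) set" where
  "parity_linked_space V V' S =
     {(G, G'). G \<in> graphs_on V \<and> G' \<in> graphs_on V' \<and> induced G S = induced G' S
               \<and> even (card G + card G')}"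

definition b_star_prob :: "'a set \<Rightarrow> 'a set \<Rightarrow> 'a set \<Rightarrow> real" where
  "b_star_prob V V' S =
     real (card {(G, G') \<in> parity_linked_space V V' S.
                   \<not> even_degenerate V G \<and> \<not> even_degenerate V' G'})
     / real (card (parity_linked_space V V' S))"

end

theory Submission
  imports Defs
begin


definition Ed :: "'a set \<Rightarrow> 'a set set" where "Ed V = {e. e \<subseteq> V \<and> card e = 2}"

lemma graphs_on_Ed: "graphs_on V = Pow (Ed V)" by (simp add: graphs_on_def Ed_def)

lemma finite_Ed: "finite V \<Longrightarrow> finite (Ed V)"
  unfolding Ed_def by (rule finite_subset[of _ "Pow V"]) auto

lemma finite_graphs: "finite V \<Longrightarrow> finite (graphs_on V)"
  by (simp add: graphs_on_Ed finite_Ed)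

lemma card_parity_subsets:
  assumes "finite A" "a \<in> A"
  shows "card {Y. Y \<subseteq> A \<and> even (card Y + k)} = 2 ^ (card A - 1)"
proof -
  have fin: "\<And>Y. Y \<subseteq> A \<Longrightarrow> finite Y" using assms(1) finite_subset by blast
  have "bij_betw (\<lambda>Y. Y - {a}) {Y. Y \<subseteq> A \<and> even (card Y + k)} (Pow (A - {a}))"
  proof (rule bij_betw_byWitness[where f' = "\<lambda>Z. if even (card Z + k) then Z else insert a Z"])
    show "\<forall>Y\<in>{Y. Y \<subseteq> A \<and> even (card Y + k)}.
        (if even (card (Y - {a}) + k) then Y - {a} else insert a (Y - {a})) = Y"
    proof
      fix Y assume Y: "Y \<in> {Y. Y \<subseteq> A \<and> even (card Y + k)}"
      show "(if even (card (Y - {a}) + k) then Y - {a} else insert a (Y - {a})) = Y"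
      proof (cases "a \<in> Y")
        case True
        have "card (Y - {a}) = card Y - 1" using True fin Y by (simp add: card_Diff_singleton)
        moreover have "card Y \<ge> 1" using True fin Y by (metis One_nat_def Suc_leI card_gt_0_iff empty_iff mem_Collect_eq)
        ultimately have "\<not> even (card (Y - {a}) + k)" using Y by auto
        then show ?thesis using True by auto
      next
        case False
        then show ?thesis using Y by auto
      qed
    qed
    show "\<forall>Z\<in>Pow (A - {a}). (if even (card Z + k) then Z else insert a Z) - {a} = Z" by auto
    show "(\<lambda>Y. Y - {a}) ` {Y. Y \<subseteq> A \<and> even (card Y + k)} \<subseteq> Pow (A - {a})" by auto
    show "(\<lambda>Z. if even (card Z + k) then Z else insert a Z) ` Pow (A - {a}) \<subseteq> {Y. Y \<subseteq> A \<and> even (card Y + k)}"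
    proof
      fix Y assume "Y \<in> (\<lambda>Z. if even (card Z + k) then Z else insert a Z) ` Pow (A - {a})"
      then obtain Z where Z: "Z \<subseteq> A - {a}" "Y = (if even (card Z + k) then Z else insert a Z)" by blast
      have "finite Z" using Z fin by blast
      moreover have "a \<notin> Z" using Z by blast
      ultimately show "Y \<in> {Y. Y \<subseteq> A \<and> even (card Y + k)}" using Z assms(2) by (auto simp: card_insert_if)
    qed
  qed
  then have "card {Y. Y \<subseteq> A \<and> even (card Y + k)} = card (Pow (A - {a}))" by (rule bij_betw_same_card)
  also have "\<dots> = 2 ^ (card A - 1)" using assms by (simp add: card_Pow)
  finally show ?thesis .
qed

lemma card_fiber_le:
  assumes "finite B" "finite P" "f ` B \<subseteq> P" "\<And>p. p \<in> P \<Longrightarrow> card {b \<in> B. f b = p} \<le> m"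
  shows "card B \<le> card P * m"
proof -
  have "B = (\<Union>p\<in>P. {b \<in> B. f b = p})" using assms(3) by auto
  then have "card B = card (\<Union>p\<in>P. {b \<in> B. f b = p})" by simp
  also have "\<dots> = (\<Sum>p\<in>P. card {b \<in> B. f b = p})"
    using assms(1,2) by (subst card_UN_disjoint) auto
  also have "\<dots> \<le> (\<Sum>p\<in>P. m)" using assms(4) by (intro sum_mono) auto
  finally show ?thesis by simp
qed

lemma card_fiber_ge:
  assumes "finite B" "finite P" "\<And>p. p \<in> P \<Longrightarrow> card {b \<in> B. f b = p} \<ge> m"
  shows "card B \<ge> card P * m"
proof -
  have "card P * m = (\<Sum>p\<in>P. m)" by simp
  also have "\<dots> \<le> (\<Sum>p\<in>P. card {b \<in> B. f b = p})" using assms(3) by (intro sum_mono) auto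
  also have "\<dots> = card (\<Union>p\<in>P. {b \<in> B. f b = p})"
    using assms(1,2) by (subst card_UN_disjoint) auto
  also have "\<dots> \<le> card B" using assms(1) by (intro card_mono) auto
  finally show ?thesis .
qed

lemma card_fiber_eq:
  assumes "finite B" "finite P" "f ` B \<subseteq> P" "\<And>p. p \<in> P \<Longrightarrow> card {b \<in> B. f b = p} = m"
  shows "card B = card P * m"
  using card_fiber_le[OF assms(1-3), of m] card_fiber_ge[OF assms(1,2), of m f] assms(4) by (simp add: le_antisym)


definition gmap :: "('a \<Rightarrow> 'b) \<Rightarrow> 'a set set \<Rightarrow> 'b set set" where
  "gmap f E = (\<lambda>e. f ` e) ` E"

lemma graphs_onD: "E \<in> graphs_on V \<Longrightarrow> e \<in> E \<Longrightarrow> e \<subseteq> V \<and> card e = 2"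
  by (auto simp: graphs_on_def)

lemma gmap_graphs:
  assumes "inj_on f V" "f ` V \<subseteq> W" "E \<in> graphs_on V"
  shows "gmap f E \<in> graphs_on W"
proof -
  have "\<And>e. e \<in> E \<Longrightarrow> f ` e \<subseteq> W \<and> card (f ` e) = 2"
  proof -
    fix e assume "e \<in> E"
    then have e: "e \<subseteq> V" "card e = 2" using graphs_onD[OF assms(3)] by auto
    then have "card (f ` e) = card e" using assms(1) by (meson card_image inj_on_subset)
    then show "f ` e \<subseteq> W \<and> card (f ` e) = 2" using e assms(2) by auto
  qed
  then show ?thesis by (auto simp: graphs_on_def gmap_def)
qed

lemma gmap_inv:
  assumes "inj_on f V" "E \<in> graphs_on V"
  shows "gmap (inv_into V f) (gmap f E) = E"
proof -
  have "\<And>e. e \<in> E \<Longrightarrow> inv_into V f ` f ` e = e"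
    using graphs_onD[OF assms(2)] assms(1) by (meson inv_into_image_cancel)
  then show ?thesis unfolding gmap_def image_image by simp
qed

lemma gmap_inv2:
  assumes "f ` V = W" "E \<in> graphs_on W"
  shows "gmap f (gmap (inv_into V f) E) = E"
proof -
  have "\<And>e. e \<in> E \<Longrightarrow> f ` inv_into V f ` e = e"
    using graphs_onD[OF assms(2)] assms(1) by (meson image_inv_into_cancel)
  then show ?thesis unfolding gmap_def image_image by simp
qed

lemma gmap_mem:
  assumes "inj_on f V" "E \<in> graphs_on V" "e \<subseteq> V"
  shows "(f ` e \<in> gmap f E) \<longleftrightarrow> e \<in> E"
proof
  assume "f ` e \<in> gmap f E"
  then obtain e' where "e' \<in> E" "f ` e = f ` e'" by (auto simp: gmap_def)
  moreover have "e' \<subseteq> V" using graphs_onD[OF assms(2) \<open>e' \<in> E\<close>] by auto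
  ultimately show "e \<in> E" using assms(1,3) by (metis inj_on_image_eq_iff)
qed (auto simp: gmap_def)

lemma gmap_card:
  assumes "inj_on f V" "E \<in> graphs_on V"
  shows "card (gmap f E) = card E"
proof -
  have "inj_on (\<lambda>e. f ` e) E"
    using assms graphs_onD[OF assms(2)] by (auto simp: inj_on_def inj_on_image_eq_iff)
  then show ?thesis by (simp add: gmap_def card_image)
qed

lemma ED_gmap:
  assumes "bij_betw f V W" "E \<in> graphs_on V" "even_degenerate V E"
  shows "even_degenerate W (gmap f E)"
proof -
  have inj: "inj_on f V" and img: "f ` V = W" using assms(1) by (auto simp: bij_betw_def)
  obtain vs where vs: "distinct vs" "set vs = V"
     "\<forall>i. i + 2 < length vs \<longrightarrow> even (card {j. i < j \<and> j < length vs \<and> {vs ! i, vs ! j} \<in> E})"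
    using assms(3) unfolding even_degenerate_def by blast
  let ?ws = "map f vs"
  have "distinct ?ws" using vs inj by (simp add: distinct_map)
  moreover have "set ?ws = W" using vs img by simp
  moreover have "\<forall>i. i + 2 < length ?ws \<longrightarrow> even (card {j. i < j \<and> j < length ?ws \<and> {?ws ! i, ?ws ! j} \<in> gmap f E})"
  proof (intro allI impI)
    fix i assume i: "i + 2 < length ?ws"
    have eq: "\<And>j. j < length vs \<Longrightarrow> ({?ws ! i, ?ws ! j} \<in> gmap f E) = ({vs ! i, vs ! j} \<in> E)"
    proof -
      fix j assume j: "j < length vs"
      have sub: "{vs ! i, vs ! j} \<subseteq> V" using vs(2) i j by auto
      have "{?ws ! i, ?ws ! j} = f ` {vs ! i, vs ! j}" using i j by simp
      then show "({?ws ! i, ?ws ! j} \<in> gmap f E) = ({vs ! i, vs ! j} \<in> E)"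
        using gmap_mem[OF inj assms(2) sub] by simp
    qed
    have "{j. i < j \<and> j < length ?ws \<and> {?ws ! i, ?ws ! j} \<in> gmap f E}
        = {j. i < j \<and> j < length vs \<and> {vs ! i, vs ! j} \<in> E}"
      using eq by auto
    then show "even (card {j. i < j \<and> j < length ?ws \<and> {?ws ! i, ?ws ! j} \<in> gmap f E})"
      using vs(3) i by simp
  qed
  ultimately show ?thesis unfolding even_degenerate_def by blast
qed

lemma ED_gmap_iff:
  assumes "bij_betw f V W" "E \<in> graphs_on V"
  shows "even_degenerate W (gmap f E) \<longleftrightarrow> even_degenerate V E"
proof
  assume "even_degenerate W (gmap f E)"
  moreover have "bij_betw (inv_into V f) W V" using assms(1) by (rule bij_betw_inv_into)
  moreover have "gmap f E \<in> graphs_on W" using assms by (intro gmap_graphs) (auto simp: bij_betw_def)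
  ultimately have "even_degenerate V (gmap (inv_into V f) (gmap f E))" using ED_gmap by blast
  then show "even_degenerate V E" using gmap_inv assms by (metis bij_betw_def)
qed (rule ED_gmap[OF assms])

lemma gmap_induced:
  assumes "inj_on f V" "G \<in> graphs_on V" "S \<subseteq> V"
  shows "induced (gmap f G) (f ` S) = gmap f (induced G S)"
proof -
  have "\<And>e. e \<in> G \<Longrightarrow> (f ` e \<subseteq> f ` S) = (e \<subseteq> S)"
  proof -
    fix e assume "e \<in> G"
    then have "e \<subseteq> V" using graphs_onD[OF assms(2)] by auto
    show "(f ` e \<subseteq> f ` S) = (e \<subseteq> S)"
    proof
      assume h: "f ` e \<subseteq> f ` S"
      show "e \<subseteq> S"
      proof
        fix x assume "x \<in> e"
        then have "f x \<in> f ` S" "x \<in> V" using h \<open>e \<subseteq> V\<close> by auto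
        then show "x \<in> S" using inj_on_image_mem_iff[OF assms(1) _ assms(3)] by blast
      qed
    qed (rule image_mono)
  qed
  then show ?thesis by (auto simp: induced_def gmap_def)
qed

lemma gmap_agree:
  assumes "\<forall>x\<in>S. f x = f' x" "\<forall>e\<in>F. e \<subseteq> S"
  shows "gmap f F = gmap f' F"
proof -
  have "\<And>e. e \<in> F \<Longrightarrow> f ` e = f' ` e" using assms by (meson image_cong subsetD)
  then show ?thesis by (simp add: gmap_def)
qed

lemma pls_map:
  assumes "bij_betw f V W" "bij_betw f' V' W'" "S \<subseteq> V \<inter> V'" "\<forall>x\<in>S. f x = f' x"
    "(G, G') \<in> parity_linked_space V V' S"
  shows "(gmap f G, gmap f' G') \<in> parity_linked_space W W' (f ` S)"
proof -
  have inj: "inj_on f V" "inj_on f' V'" and img: "f ` V = W" "f' ` V' = W'"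
    using assms(1,2) by (auto simp: bij_betw_def)
  have G: "G \<in> graphs_on V" "G' \<in> graphs_on V'" "induced G S = induced G' S" "even (card G + card G')"
    using assms(5) by (auto simp: parity_linked_space_def)
  have SV: "S \<subseteq> V" "S \<subseteq> V'" using assms(3) by auto
  have fS: "f ` S = f' ` S" using assms(4) by (intro image_cong) auto
  have sub: "\<forall>e\<in>induced G' S. e \<subseteq> S" by (simp add: induced_def)
  have "induced (gmap f' G') (f ` S) = induced (gmap f' G') (f' ` S)" using fS by simp
  also have "\<dots> = gmap f' (induced G' S)" using gmap_induced[OF inj(2) G(2) SV(2)] .
  also have "\<dots> = gmap f (induced G' S)"
    using gmap_agree[OF assms(4) sub] by simp
  also have "\<dots> = gmap f (induced G S)" using G(3) by simp
  also have "\<dots> = induced (gmap f G) (f ` S)" using gmap_induced[OF inj(1) G(1) SV(1)] by simp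
  finally have ind: "induced (gmap f G) (f ` S) = induced (gmap f' G') (f ` S)" by simp
  have g1: "gmap f G \<in> graphs_on W" using gmap_graphs[OF inj(1) _ G(1)] img(1) by simp
  have g2: "gmap f' G' \<in> graphs_on W'" using gmap_graphs[OF inj(2) _ G(2)] img(2) by simp
  have ev: "even (card (gmap f G) + card (gmap f' G'))"
    using gmap_card[OF inj(1) G(1)] gmap_card[OF inj(2) G(2)] G(4) by simp
  show ?thesis unfolding parity_linked_space_def using g1 g2 ind ev by simp
qed

lemma b_star_transport:
  assumes "bij_betw f V W" "bij_betw f' V' W'" "S \<subseteq> V \<inter> V'" "\<forall>x\<in>S. f x = f' x"
  shows "b_star_prob V V' S = b_star_prob W W' (f ` S)"
proof -
  define g where "g = inv_into V f"
  define g' where "g' = inv_into V' f'"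
  have bg: "bij_betw g W V" "bij_betw g' W' V'" using assms(1,2) g_def g'_def by (auto intro: bij_betw_inv_into)
  have inj: "inj_on f V" "inj_on f' V'" and img: "f ` V = W" "f' ` V' = W'"
    using assms(1,2) by (auto simp: bij_betw_def)
  have fS: "f ` S \<subseteq> W \<inter> W'"
    using assms(3,4) img by auto (metis IntD2 image_eqI subsetD)
  have gS: "\<forall>y\<in>f ` S. g y = g' y"
    using assms(3,4) inj g_def g'_def by auto (metis IntD1 IntD2 inv_into_f_f subsetD)
  have gfS: "g ` f ` S = S" using inj assms(3) g_def by (simp add: inv_into_image_cancel)
  let ?P = "parity_linked_space V V' S"
  let ?Q = "parity_linked_space W W' (f ` S)"
  let ?\<Phi> = "\<lambda>(G, G'). (gmap f G, gmap f' G')"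
  let ?\<Psi> = "\<lambda>(G, G'). (gmap g G, gmap g' G')"
  have PQ: "\<And>p. p \<in> ?P \<Longrightarrow> ?\<Phi> p \<in> ?Q" using pls_map[OF assms] by auto
  have QP: "\<And>q. q \<in> ?Q \<Longrightarrow> ?\<Psi> q \<in> ?P"
    using pls_map[OF bg fS gS] gfS by auto
  have PsiPhi: "\<And>p. p \<in> ?P \<Longrightarrow> ?\<Psi> (?\<Phi> p) = p"
    using gmap_inv inj g_def g'_def by (auto simp: parity_linked_space_def)
  have ginj: "inj_on g W" "inj_on g' W'" using bg by (auto simp: bij_betw_def)
  have PhiPsi: "\<And>q. q \<in> ?Q \<Longrightarrow> ?\<Phi> (?\<Psi> q) = q"
    using gmap_inv2[OF img(1)] gmap_inv2[OF img(2)] g_def g'_def by (auto simp: parity_linked_space_def)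
  have ED1: "\<And>G G'. (G, G') \<in> ?P \<Longrightarrow>
     (\<not> even_degenerate W (gmap f G) \<and> \<not> even_degenerate W' (gmap f' G')) =
     (\<not> even_degenerate V G \<and> \<not> even_degenerate V' G')"
    using ED_gmap_iff[OF assms(1)] ED_gmap_iff[OF assms(2)] by (auto simp: parity_linked_space_def)
  have c1: "card ?P = card ?Q"
    by (rule bij_betw_same_card[of ?\<Phi>], rule bij_betw_byWitness[where f' = ?\<Psi>])
       (use PQ QP PsiPhi PhiPsi in auto)
  have c2: "card {(G, G') \<in> ?P. \<not> even_degenerate V G \<and> \<not> even_degenerate V' G'}
          = card {(G, G') \<in> ?Q. \<not> even_degenerate W G \<and> \<not> even_degenerate W' G'}"
  proof (rule bij_betw_same_card[of ?\<Phi>], rule bij_betw_byWitness[where f' = ?\<Psi>])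
    show "\<forall>a\<in>{(G, G') \<in> ?P. \<not> even_degenerate V G \<and> \<not> even_degenerate V' G'}. ?\<Psi> (?\<Phi> a) = a"
      using PsiPhi by auto
    show "\<forall>a'\<in>{(G, G') \<in> ?Q. \<not> even_degenerate W G \<and> \<not> even_degenerate W' G'}. ?\<Phi> (?\<Psi> a') = a'"
      using PhiPsi by auto
    show "?\<Phi> ` {(G, G') \<in> ?P. \<not> even_degenerate V G \<and> \<not> even_degenerate V' G'}
       \<subseteq> {(G, G') \<in> ?Q. \<not> even_degenerate W G \<and> \<not> even_degenerate W' G'}"
      using PQ ED1 by fastforce
    show "?\<Psi> ` {(G, G') \<in> ?Q. \<not> even_degenerate W G \<and> \<not> even_degenerate W' G'}
       \<subseteq> {(G, G') \<in> ?P. \<not> even_degenerate V G \<and> \<not> even_degenerate V' G'}"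
    proof
      fix p assume "p \<in> ?\<Psi> ` {(G, G') \<in> ?Q. \<not> even_degenerate W G \<and> \<not> even_degenerate W' G'}"
      then obtain q where q: "q \<in> ?Q" "case q of (G, G') \<Rightarrow> \<not> even_degenerate W G \<and> \<not> even_degenerate W' G'" "p = ?\<Psi> q"
        by auto
      have "p \<in> ?P" using QP q by auto
      moreover have "?\<Phi> p = q" using PhiPsi q by auto
      moreover obtain G G' where pG: "p = (G, G')" by (cases p)
      ultimately have "q = (gmap f G, gmap f' G')" "(G, G') \<in> ?P" by auto
      then show "p \<in> {(G, G') \<in> ?P. \<not> even_degenerate V G \<and> \<not> even_degenerate V' G'}"
        using ED1[of G G'] q(2) pG by auto
    qed
  qed
  show ?thesis unfolding b_star_prob_def using c1 c2 by simp
qed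


definition star :: "'a set \<Rightarrow> 'a set \<Rightarrow> 'a set set" where
  "star V T = {e \<in> Ed V. e \<inter> T \<noteq> {}}"

definition Rel :: "'a set \<Rightarrow> 'a set \<Rightarrow> ('a set set \<times> 'a set set) set" where
  "Rel V T = {(G, K). G \<in> graphs_on V \<and> K \<in> graphs_on V \<and> G - star V T = K - star V T
                   \<and> even (card G + card K)}"

definition NE :: "'a set \<Rightarrow> 'a set set set" where
  "NE V = {E \<in> graphs_on V. \<not> even_degenerate V E}"

definition XX :: "'a set \<Rightarrow> 'a set \<Rightarrow> nat" where
  "XX V T = card {(G, K) \<in> Rel V T. G \<in> NE V \<and> K \<notin> NE V}"

definition msz :: "'a set \<Rightarrow> 'a set \<Rightarrow> nat" where
  "msz V T = 2 ^ (card (star V T) - 1)"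

lemma star_sub: "star V T \<subseteq> Ed V" unfolding star_def by blast

lemma finite_star: "finite V \<Longrightarrow> finite (star V T)"
  by (rule finite_subset[OF star_sub finite_Ed])

lemma Rel_sym:
  assumes "(G, K) \<in> Rel V T" shows "(K, G) \<in> Rel V T"
proof -
  have "G \<in> graphs_on V" "K \<in> graphs_on V" "G - star V T = K - star V T" "even (card G + card K)"
    using assms by (simp_all add: Rel_def)
  then show ?thesis unfolding Rel_def by (simp add: add.commute)
qed

lemma finite_Rel:
  assumes "finite V" shows "finite (Rel V T)"
proof -
  have "Rel V T \<subseteq> graphs_on V \<times> graphs_on V" unfolding Rel_def by blast
  moreover have "finite (graphs_on V \<times> graphs_on V)" using finite_graphs[OF assms] by simp
  ultimately show ?thesis by (rule finite_subset)
qed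

lemma class_size:
  assumes "finite V" "G \<in> graphs_on V" "star V T \<noteq> {}"
  shows "card {K. (G, K) \<in> Rel V T} = msz V T"
proof -
  let ?s = "star V T"
  let ?k = "card G + card (G - ?s)"
  have fE: "finite (Ed V)" using assms(1) by (rule finite_Ed)
  have cardsplit: "\<And>K. K \<subseteq> Ed V \<Longrightarrow> card K = card (K - ?s) + card (K \<inter> ?s)"
  proof -
    fix K assume "K \<subseteq> Ed V"
    then have "finite K" using fE by (rule finite_subset)
    then have "card ((K - ?s) \<union> (K \<inter> ?s)) = card (K - ?s) + card (K \<inter> ?s)"
      by (intro card_Un_disjoint) auto
    then show "card K = card (K - ?s) + card (K \<inter> ?s)" by (simp add: Un_Diff_Int)
  qed
  have G: "G \<subseteq> Ed V" using assms(2) by (simp add: graphs_on_Ed)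
  have "bij_betw (\<lambda>K. K \<inter> ?s) {K. (G, K) \<in> Rel V T} {Y. Y \<subseteq> ?s \<and> even (card Y + ?k)}"
  proof (rule bij_betw_byWitness[where f' = "\<lambda>Y. (G - ?s) \<union> Y"])
    show "\<forall>K\<in>{K. (G, K) \<in> Rel V T}. G - ?s \<union> K \<inter> ?s = K"
    proof
      fix K assume "K \<in> {K. (G, K) \<in> Rel V T}"
      then have "G - ?s = K - ?s" by (simp add: Rel_def)
      then show "G - ?s \<union> K \<inter> ?s = K" by blast
    qed
    show "\<forall>Y\<in>{Y. Y \<subseteq> ?s \<and> even (card Y + ?k)}. (G - ?s \<union> Y) \<inter> ?s = Y" by auto
    show "(\<lambda>K. K \<inter> ?s) ` {K. (G, K) \<in> Rel V T} \<subseteq> {Y. Y \<subseteq> ?s \<and> even (card Y + ?k)}"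
    proof
      fix Y assume "Y \<in> (\<lambda>K. K \<inter> ?s) ` {K. (G, K) \<in> Rel V T}"
      then obtain K where K: "(G, K) \<in> Rel V T" "Y = K \<inter> ?s" by blast
      have KE: "K \<subseteq> Ed V" and eq: "G - ?s = K - ?s" and ev: "even (card G + card K)"
        using K by (auto simp: Rel_def graphs_on_Ed)
      have "card K = card (G - ?s) + card Y" using cardsplit[OF KE] eq K(2) by simp
      then have "even (card Y + ?k)" using ev by presburger
      then show "Y \<in> {Y. Y \<subseteq> ?s \<and> even (card Y + ?k)}" using K(2) by blast
    qed
    show "(\<lambda>Y. G - ?s \<union> Y) ` {Y. Y \<subseteq> ?s \<and> even (card Y + ?k)} \<subseteq> {K. (G, K) \<in> Rel V T}"
    proof
      fix K assume "K \<in> (\<lambda>Y. G - ?s \<union> Y) ` {Y. Y \<subseteq> ?s \<and> even (card Y + ?k)}"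
      then obtain Y where Y: "Y \<subseteq> ?s" "even (card Y + ?k)" "K = G - ?s \<union> Y" by blast
      have KE: "K \<subseteq> Ed V" using Y G star_sub by blast
      have "K - ?s = G - ?s" "K \<inter> ?s = Y" using Y by auto
      then have "card K = card (G - ?s) + card Y" using cardsplit[OF KE] by simp
      then have "even (card G + card K)" using Y(2) by presburger
      then show "K \<in> {K. (G, K) \<in> Rel V T}"
        using KE G \<open>K - ?s = G - ?s\<close> by (simp add: Rel_def graphs_on_Ed)
    qed
  qed
  then have "card {K. (G, K) \<in> Rel V T} = card {Y. Y \<subseteq> ?s \<and> even (card Y + ?k)}"
    by (rule bij_betw_same_card)
  also have "\<dots> = 2 ^ (card ?s - 1)"
  proof -
    obtain a where "a \<in> ?s" using assms(3) by blast
    then show ?thesis by (rule card_parity_subsets[OF finite_star[OF assms(1)]])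
  qed
  finally show ?thesis by (simp add: msz_def)
qed

lemma class_size':
  assumes "finite V" "H \<in> graphs_on V" "star V T \<noteq> {}"
  shows "card {G. (G, H) \<in> Rel V T} = msz V T"
proof -
  have "{G. (G, H) \<in> Rel V T} = {G. (H, G) \<in> Rel V T}" using Rel_sym by blast
  then show ?thesis using class_size[OF assms] by simp
qed


lemma star_insert: "star V (insert w T) = star V T \<union> star V {w}"
  by (auto simp: star_def)

lemma star_inter:
  assumes "T \<subseteq> V" "w \<in> V" "w \<notin> T"
  shows "star V T \<inter> star V {w} = (\<lambda>t. {t, w}) ` T"
proof
  show "star V T \<inter> star V {w} \<subseteq> (\<lambda>t. {t, w}) ` T"
  proof
    fix e assume e: "e \<in> star V T \<inter> star V {w}"
    then have "card e = 2" "w \<in> e" and "e \<inter> T \<noteq> {}" by (auto simp: star_def Ed_def)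
    then obtain t where t: "t \<in> e" "t \<in> T" by blast
    then have "t \<noteq> w" using assms(3) by blast
    obtain x y where "e = {x, y}" "x \<noteq> y" using \<open>card e = 2\<close> by (meson card_2_iff)
    then have "e = {t, w}" using t \<open>w \<in> e\<close> \<open>t \<noteq> w\<close> by auto
    then show "e \<in> (\<lambda>t. {t, w}) ` T" using t by blast
  qed
  show "(\<lambda>t. {t, w}) ` T \<subseteq> star V T \<inter> star V {w}"
  proof
    fix e assume "e \<in> (\<lambda>t. {t, w}) ` T"
    then obtain t where t: "t \<in> T" "e = {t, w}" by blast
    then have "t \<noteq> w" using assms(3) by blast
    then have "card e = 2" using t by simp
    then show "e \<in> star V T \<inter> star V {w}" using t assms by (auto simp: star_def Ed_def)
  qed
qed

lemma card_cross:
  assumes "w \<notin> T"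
  shows "card ((\<lambda>t. {t, w}) ` T) = card T"
proof -
  have "inj_on (\<lambda>t. {t, w}) T" using assms by (auto simp: inj_on_def doubleton_eq_iff)
  then show ?thesis by (rule card_image)
qed

lemma inter_count:
  assumes "finite V" "T \<subseteq> V" "T \<noteq> {}" "w \<in> V" "w \<notin> T" "(G, K) \<in> Rel V (insert w T)"
  shows "2 ^ (card T - 1) \<le> card {H. (G, H) \<in> Rel V T \<and> (H, K) \<in> Rel V {w}}"
proof -
  define sT where "sT = star V T"
  define sw where "sw = star V {w}"
  define C where "C = sT \<inter> sw"
  define H0 where "H0 = (G \<inter> (sw - C)) \<union> (K \<inter> (sT - C)) \<union> (G - sT - sw)"
  define k where "k = card G + card H0"
  have C: "C = (\<lambda>t. {t, w}) ` T" using star_inter[OF assms(2,4,5)] C_def sT_def sw_def by simp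
  have cardC: "card C = card T" using C card_cross[OF assms(5)] by simp
  obtain t where "t \<in> T" using assms(3) by blast
  then have "{t, w} \<in> C" using C by blast
  have fE: "finite (Ed V)" using assms(1) by (rule finite_Ed)
  have sub: "sT \<subseteq> Ed V" "sw \<subseteq> Ed V" using star_sub sT_def sw_def by auto
  have R: "G \<in> graphs_on V" "K \<in> graphs_on V" "G - star V (insert w T) = K - star V (insert w T)"
    "even (card G + card K)" using assms(6) by (simp_all add: Rel_def)
  have GK: "G \<subseteq> Ed V" "K \<subseteq> Ed V" "G - (sT \<union> sw) = K - (sT \<union> sw)" "even (card G + card K)"
    using R by (simp_all add: graphs_on_Ed star_insert[of V w T] sT_def sw_def)
  have H0E: "H0 \<subseteq> Ed V" using GK H0_def by blast
  have finH0: "finite H0" using H0E fE by (rule finite_subset)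
  have CE: "C \<subseteq> Ed V" using sub C_def by blast
  have fC: "finite C" using CE fE by (rule finite_subset)
  let ?Ys = "{Y. Y \<subseteq> C \<and> even (card Y + k)}"
  let ?Hs = "{H. (G, H) \<in> Rel V T \<and> (H, K) \<in> Rel V {w}}"
  have cY: "card ?Ys = 2 ^ (card T - 1)"
    using card_parity_subsets[OF fC \<open>{t, w} \<in> C\<close>] cardC by simp
  have inj: "inj_on (\<lambda>Y. H0 \<union> Y) ?Ys"
  proof (rule inj_onI)
    fix Y1 Y2 assume "Y1 \<in> ?Ys" "Y2 \<in> ?Ys" "H0 \<union> Y1 = H0 \<union> Y2"
    moreover have "H0 \<inter> C = {}" using H0_def C_def by blast
    ultimately show "Y1 = Y2" by blast
  qed
  have img: "(\<lambda>Y. H0 \<union> Y) ` ?Ys \<subseteq> ?Hs"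
  proof
    fix H assume "H \<in> (\<lambda>Y. H0 \<union> Y) ` ?Ys"
    then obtain Y where Y: "Y \<subseteq> C" "even (card Y + k)" "H = H0 \<union> Y" by blast
    have HE: "H \<subseteq> Ed V" using Y H0E C_def sub by blast
    have "finite Y" using Y(1) fC by (rule finite_subset)
    moreover have "H0 \<inter> Y = {}" using Y(1) H0_def C_def by blast
    ultimately have cH: "card H = card H0 + card Y" using Y finH0 by (simp add: card_Un_disjoint)
    have e1: "even (card G + card H)" using cH Y(2) k_def by auto
    have e2: "even (card H + card K)" using e1 GK(4) by presburger
    have d1: "G - sT = H - sT" using Y H0_def C_def by blast
    have d2: "H - sw = K - sw" using Y H0_def C_def GK(3) by blast
    show "H \<in> ?Hs" using HE GK(1,2) d1 d2 e1 e2
      unfolding Rel_def graphs_on_Ed sT_def sw_def by simp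
  qed
  have fHs: "finite ?Hs"
    by (rule finite_subset[of _ "graphs_on V"]) (auto simp: Rel_def finite_graphs[OF assms(1)])
  have "card ?Ys \<le> card ?Hs" using card_inj_on_le[OF inj img fHs] .
  then show ?thesis using cY by simp
qed


lemma star_ne:
  assumes "T \<subseteq> V" "T \<noteq> {}" "w \<in> V" "w \<notin> T"
  shows "star V T \<noteq> {}" "star V {w} \<noteq> {}"
proof -
  obtain t where "t \<in> T" using assms(2) by blast
  then have "{t, w} \<in> star V T \<inter> star V {w}" using star_inter[OF assms(1,3,4)] by blast
  then show "star V T \<noteq> {}" "star V {w} \<noteq> {}" by auto
qed

lemma triangle_nat:
  assumes "finite V" "T \<subseteq> V" "T \<noteq> {}" "w \<in> V" "w \<notin> T"
  shows "XX V (insert w T) * 2 ^ (card T - 1) \<le> XX V T * msz V {w} + XX V {w} * msz V T"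
proof -
  note sne = star_ne[OF assms(2-5)]
  define Bad where "Bad = {(G, H, K). (G, H) \<in> Rel V T \<and> (H, K) \<in> Rel V {w} \<and> G \<in> NE V \<and> K \<notin> NE V}"
  define B1 where "B1 = {(G, H, K). (G, H) \<in> Rel V T \<and> (H, K) \<in> Rel V {w} \<and> G \<in> NE V \<and> H \<notin> NE V}"
  define B2 where "B2 = {(G, H, K). (G, H) \<in> Rel V T \<and> (H, K) \<in> Rel V {w} \<and> H \<in> NE V \<and> K \<notin> NE V}"
  define P1 where "P1 = {(G, H) \<in> Rel V T. G \<in> NE V \<and> H \<notin> NE V}"
  define P2 where "P2 = {(H, K) \<in> Rel V {w}. H \<in> NE V \<and> K \<notin> NE V}"
  define P0 where "P0 = {(G, K) \<in> Rel V (insert w T). G \<in> NE V \<and> K \<notin> NE V}"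
  have fG: "finite (graphs_on V)" using assms(1) by (rule finite_graphs)
  have fBig: "finite (graphs_on V \<times> graphs_on V \<times> graphs_on V)" using fG by simp
  have fBad: "finite Bad" by (rule finite_subset[OF _ fBig]) (auto simp: Bad_def Rel_def)
  have fB1: "finite B1" by (rule finite_subset[OF _ fBig]) (auto simp: B1_def Rel_def)
  have fB2: "finite B2" by (rule finite_subset[OF _ fBig]) (auto simp: B2_def Rel_def)
  have fP1: "finite P1" by (rule finite_subset[OF _ finite_Rel[OF assms(1), of "T"]]) (auto simp: P1_def)
  have fP2: "finite P2" by (rule finite_subset[OF _ finite_Rel[OF assms(1), of "{w}"]]) (auto simp: P2_def)
  have fP0: "finite P0" by (rule finite_subset[OF _ finite_Rel[OF assms(1), of "(insert w T)"]]) (auto simp: P0_def)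
  have "card B1 \<le> card P1 * msz V {w}"
  proof (rule card_fiber_le[OF fB1 fP1, where f = "\<lambda>(G, H, K). (G, H)"])
    show "(\<lambda>(G, H, K). (G, H)) ` B1 \<subseteq> P1" by (auto simp: B1_def P1_def)
    fix p assume "p \<in> P1"
    then obtain G H where p: "p = (G, H)" "(G, H) \<in> Rel V T" "G \<in> NE V" "H \<notin> NE V"
      by (auto simp: P1_def)
    have "{b \<in> B1. (\<lambda>(G, H, K). (G, H)) b = p} = (\<lambda>K. (G, H, K)) ` {K. (H, K) \<in> Rel V {w}}"
    proof (intro equalityI subsetI)
      fix b assume b0: "b \<in> {b \<in> B1. (\<lambda>(G, H, K). (G, H)) b = p}"
      obtain x y z where b: "b = (x, y, z)" by (cases b)
      have h: "(y, z) \<in> Rel V {w}" "(x, y) = p" using b0 unfolding b by (simp_all add: B1_def)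
      then have "x = G" "y = H" using p(1) by simp_all
      then show "b \<in> (\<lambda>K. (G, H, K)) ` {K. (H, K) \<in> Rel V {w}}" using b h(1) by simp
    next
      fix b assume "b \<in> (\<lambda>K. (G, H, K)) ` {K. (H, K) \<in> Rel V {w}}"
      then obtain K where "b = (G, H, K)" "(H, K) \<in> Rel V {w}" by blast
      then show "b \<in> {b \<in> B1. (\<lambda>(G, H, K). (G, H)) b = p}" using p by (simp add: B1_def)
    qed
    moreover have "card ((\<lambda>K. (G, H, K)) ` {K. (H, K) \<in> Rel V {w}}) = msz V {w}"
    proof -
      have Hg: "H \<in> graphs_on V" using p(2) by (simp add: Rel_def)
      have "card ((\<lambda>K. (G, H, K)) ` {K. (H, K) \<in> Rel V {w}}) = card {K. (H, K) \<in> Rel V {w}}"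
        by (rule card_image) (simp add: inj_on_def)
      also have "\<dots> = msz V {w}" by (rule class_size[OF assms(1) Hg sne(2)])
      finally show ?thesis .
    qed
    ultimately show "card {b \<in> B1. (\<lambda>(G, H, K). (G, H)) b = p} \<le> msz V {w}" by simp
  qed
  moreover have "card B2 \<le> card P2 * msz V T"
  proof (rule card_fiber_le[OF fB2 fP2, where f = "\<lambda>(G, H, K). (H, K)"])
    show "(\<lambda>(G, H, K). (H, K)) ` B2 \<subseteq> P2" by (auto simp: B2_def P2_def)
    fix p assume "p \<in> P2"
    then obtain H K where p: "p = (H, K)" "(H, K) \<in> Rel V {w}" "H \<in> NE V" "K \<notin> NE V"
      by (auto simp: P2_def)
    have "{b \<in> B2. (\<lambda>(G, H, K). (H, K)) b = p} = (\<lambda>G. (G, H, K)) ` {G. (G, H) \<in> Rel V T}"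
    proof (intro equalityI subsetI)
      fix b assume b0: "b \<in> {b \<in> B2. (\<lambda>(G, H, K). (H, K)) b = p}"
      obtain x y z where b: "b = (x, y, z)" by (cases b)
      have h: "(x, y) \<in> Rel V T" "(y, z) = p" using b0 unfolding b by (simp_all add: B2_def)
      then have "y = H" "z = K" using p(1) by simp_all
      then show "b \<in> (\<lambda>G. (G, H, K)) ` {G. (G, H) \<in> Rel V T}" using b h(1) by simp
    next
      fix b assume "b \<in> (\<lambda>G. (G, H, K)) ` {G. (G, H) \<in> Rel V T}"
      then obtain G where "b = (G, H, K)" "(G, H) \<in> Rel V T" by blast
      then show "b \<in> {b \<in> B2. (\<lambda>(G, H, K). (H, K)) b = p}" using p by (simp add: B2_def)
    qed
    moreover have "card ((\<lambda>G. (G, H, K)) ` {G. (G, H) \<in> Rel V T}) = msz V T"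
    proof -
      have Hg: "H \<in> graphs_on V" using p(2) by (simp add: Rel_def)
      have "card ((\<lambda>G. (G, H, K)) ` {G. (G, H) \<in> Rel V T}) = card {G. (G, H) \<in> Rel V T}"
        by (rule card_image) (simp add: inj_on_def)
      also have "\<dots> = msz V T" by (rule class_size'[OF assms(1) Hg sne(1)])
      finally show ?thesis .
    qed
    ultimately show "card {b \<in> B2. (\<lambda>(G, H, K). (H, K)) b = p} \<le> msz V T" by simp
  qed
  moreover have "card Bad \<le> card B1 + card B2"
  proof -
    have "Bad \<subseteq> B1 \<union> B2" by (auto simp: Bad_def B1_def B2_def)
    then have "card Bad \<le> card (B1 \<union> B2)" using fB1 fB2 by (intro card_mono) auto
    also have "\<dots> \<le> card B1 + card B2" by (rule card_Un_le)
    finally show ?thesis .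
  qed
  moreover have "card P0 * 2 ^ (card T - 1) \<le> card Bad"
  proof (rule card_fiber_ge[OF fBad fP0, where f = "\<lambda>(G, H, K). (G, K)"])
    fix p assume "p \<in> P0"
    then obtain G K where p: "p = (G, K)" "(G, K) \<in> Rel V (insert w T)" "G \<in> NE V" "K \<notin> NE V"
      by (auto simp: P0_def)
    have "{b \<in> Bad. (\<lambda>(G, H, K). (G, K)) b = p}
        = (\<lambda>H. (G, H, K)) ` {H. (G, H) \<in> Rel V T \<and> (H, K) \<in> Rel V {w}}"
      using p by (auto simp: Bad_def)
    moreover have "card ((\<lambda>H. (G, H, K)) ` {H. (G, H) \<in> Rel V T \<and> (H, K) \<in> Rel V {w}})
        = card {H. (G, H) \<in> Rel V T \<and> (H, K) \<in> Rel V {w}}"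
      by (subst card_image) (auto simp: inj_on_def)
    ultimately show "2 ^ (card T - 1) \<le> card {b \<in> Bad. (\<lambda>(G, H, K). (G, K)) b = p}"
      using inter_count[OF assms p(2)] by simp
  qed
  ultimately show ?thesis unfolding XX_def P0_def[symmetric] P1_def[symmetric] P2_def[symmetric]
    by linarith
qed


lemma msz_pos: "msz V T > 0" by (simp add: msz_def)

lemma msz_ident:
  assumes "finite V" "T \<subseteq> V" "T \<noteq> {}" "w \<in> V" "w \<notin> T"
  shows "2 ^ (card T - 1) * msz V (insert w T) = msz V T * msz V {w}"
proof -
  define a where "a = card (star V T)"
  define b where "b = card (star V {w})"
  define c where "c = card T"
  have fT: "finite T" using assms(2,1) by (rule finite_subset)
  have I: "star V T \<inter> star V {w} = (\<lambda>t. {t, w}) ` T" by (rule star_inter[OF assms(2,4,5)])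
  have cI: "card (star V T \<inter> star V {w}) = c" using I card_cross[OF assms(5)] c_def by simp
  have fs: "finite (star V T)" "finite (star V {w})" using finite_star[OF assms(1)] by auto
  have "card (star V T) + card (star V {w}) = card (star V T \<union> star V {w}) + card (star V T \<inter> star V {w})"
    using fs by (rule card_Un_Int)
  then have u0: "card (star V (insert w T)) + c = a + b" using cI a_def b_def star_insert[of V w T] by simp
  then have u: "card (star V (insert w T)) = a + b - c" by simp
  have c1: "c \<ge> 1" using fT assms(3) c_def by (simp add: Suc_leI card_gt_0_iff)
  have ca: "c \<le> a" unfolding a_def using cI fs by (metis card_mono inf_le1)
  have cb: "c \<le> b" unfolding b_def using cI fs by (metis card_mono inf_le2)
  have e: "(c - 1) + (a + b - c - 1) = (a - 1) + (b - 1)" using c1 ca cb by arith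
  have "2 ^ (card T - 1) * msz V (insert w T) = (2::nat) ^ ((c - 1) + (a + b - c - 1))"
    by (simp add: msz_def u c_def power_add)
  also have "\<dots> = 2 ^ ((a - 1) + (b - 1))" using e by simp
  also have "\<dots> = msz V T * msz V {w}" by (simp add: msz_def a_def b_def power_add)
  finally show ?thesis .
qed

lemma sum_bound:
  assumes "finite V" "T \<subseteq> V" "T \<noteq> {}"
  shows "real (XX V T) / real (msz V T) \<le> (\<Sum>w\<in>T. real (XX V {w}) / real (msz V {w}))"
proof -
  have "finite T" using assms(2,1) by (rule finite_subset)
  then show ?thesis using assms(3,2)
  proof (induction T rule: finite_ne_induct)
    case (singleton x)
    then show ?case by simp
  next
    case (insert x F)
    have F: "F \<subseteq> V" "x \<in> V" using insert by auto
    define M where "M = (2::nat) ^ (card F - 1)"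
    have tri: "XX V (insert x F) * M \<le> XX V F * msz V {x} + XX V {x} * msz V F"
      using triangle_nat[OF assms(1) F(1) insert(2) F(2) insert(3)] M_def by simp
    have h1: "real (XX V (insert x F)) * real M \<le> real (XX V F) * real (msz V {x}) + real (XX V {x}) * real (msz V F)"
      using tri by (metis of_nat_add of_nat_le_iff of_nat_mult)
    have h2: "real M * real (msz V (insert x F)) = real (msz V F) * real (msz V {x})"
      using msz_ident[OF assms(1) F(1) insert(2) F(2) insert(3)] M_def by (metis of_nat_mult)
    have pM: "real M > 0" by (simp add: M_def)
    have pF: "real (msz V F) > 0" "real (msz V {x}) > 0" "real (msz V (insert x F)) > 0"
      using msz_pos by auto
    have "real (XX V (insert x F)) / real (msz V (insert x F))
        = real (XX V (insert x F)) * real M / (real (msz V F) * real (msz V {x}))"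
      using pM pF h2[symmetric] by (simp add: field_simps)
    also have "\<dots> \<le> (real (XX V F) * real (msz V {x}) + real (XX V {x}) * real (msz V F)) / (real (msz V F) * real (msz V {x}))"
      using h1 pF by (intro divide_right_mono) auto
    also have "\<dots> = real (XX V F) / real (msz V F) + real (XX V {x}) / real (msz V {x})"
      using pF by (simp add: field_simps)
    also have "\<dots> \<le> (\<Sum>w\<in>F. real (XX V {w}) / real (msz V {w})) + real (XX V {x}) / real (msz V {x})"
      using insert(4)[OF F(1)] by simp
    also have "\<dots> = (\<Sum>w\<in>insert x F. real (XX V {w}) / real (msz V {w}))"
      using insert(1,3) by simp
    finally show ?case .
  qed
qed


lemma starV: "star V V = Ed V"
proof -
  have "\<And>e. e \<in> Ed V \<Longrightarrow> e \<inter> V \<noteq> {}"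
  proof -
    fix e assume "e \<in> Ed V"
    then have "e \<subseteq> V" "card e = 2" by (auto simp: Ed_def)
    then show "e \<inter> V \<noteq> {}" by (metis card.empty inf.absorb1 zero_neq_numeral)
  qed
  then show ?thesis by (auto simp: star_def)
qed

lemma induced_star:
  assumes "G \<in> graphs_on V"
  shows "induced G (V - {w}) = G - star V {w}"
  using assms by (auto simp: induced_def star_def graphs_on_Ed Ed_def)

lemma pls_Rel:
  "parity_linked_space V V (V - {w}) = Rel V {w}"
  by (auto simp: parity_linked_space_def Rel_def induced_star)

lemma card_Pair_image: "card (Pair G ` A) = card A"
  by (rule card_image) (simp add: inj_on_def)

lemma core:
  assumes "finite V" "card V = n" "n \<ge> 2" "\<forall>w\<in>V. b_star_prob V V (V - {w}) = b"
  shows "b \<le> real (card (NE V)) / real (card (graphs_on V))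
       - real (card (NE V)) / real (card (graphs_on V)) *
         (1 - 2 * (real (card (NE V)) / real (card (graphs_on V)))) / real n"
proof -
  define a where "a = card (NE V)"
  define g where "g = card (graphs_on V)"
  define mV where "mV = msz V V"
  have fG: "finite (graphs_on V)" using assms(1) by (rule finite_graphs)
  have fE: "finite (Ed V)" using assms(1) by (rule finite_Ed)
  have twoel: "\<And>w. w \<in> V \<Longrightarrow> \<exists>u\<in>V. u \<noteq> w"
  proof -
    fix w assume "w \<in> V"
    have "card (V - {w}) \<ge> 1" using assms(2,3) \<open>w \<in> V\<close> assms(1) by (simp add: card_Diff_singleton)
    then have "V - {w} \<noteq> {}" by (metis card.empty not_one_le_zero)
    then show "\<exists>u\<in>V. u \<noteq> w" by blast
  qed
  have swne: "\<And>w. w \<in> V \<Longrightarrow> star V {w} \<noteq> {}"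
  proof -
    fix w assume w: "w \<in> V"
    then obtain u where "u \<in> V" "u \<noteq> w" using twoel by blast
    then show "star V {w} \<noteq> {}" using star_ne[of "{u}" V w] w by auto
  qed
  have Vne: "V \<noteq> {}" using assms(2,3) by auto
  then obtain x where "x \<in> V" by blast
  have EdV: "Ed V \<noteq> {}" using starV swne[OF \<open>x \<in> V\<close>] star_sub by blast
  have g: "g = 2 ^ card (Ed V)" by (simp add: g_def graphs_on_Ed card_Pow fE)
  have cE: "card (Ed V) \<ge> 1" using EdV fE by (simp add: Suc_leI card_gt_0_iff)
  have gm: "real g = 2 * real mV"
  proof -
    have "card (Ed V) = Suc (card (Ed V) - 1)" using cE by simp
    then have "(2::nat) ^ card (Ed V) = 2 * 2 ^ (card (Ed V) - 1)" by (metis power_Suc)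
    then show ?thesis by (simp add: g mV_def msz_def starV)
  qed
  have mpos: "real mV > 0" using msz_pos mV_def by simp
  have NEsub: "NE V \<subseteq> graphs_on V" by (auto simp: NE_def)
  have fNE: "finite (NE V)" using NEsub fG by (rule finite_subset)
  have XVnat: "a * (mV - a) \<le> XX V V"
    unfolding XX_def a_def
  proof (rule card_fiber_ge[where f = fst])
    show "finite {(G, K) \<in> Rel V V. G \<in> NE V \<and> K \<notin> NE V}"
      by (rule finite_subset[OF _ finite_Rel[OF assms(1), of V]]) auto
    show "finite (NE V)" by (rule fNE)
    fix G assume G: "G \<in> NE V"
    then have Gg: "G \<in> graphs_on V" by (auto simp: NE_def)
    have "{b \<in> {(G, K) \<in> Rel V V. G \<in> NE V \<and> K \<notin> NE V}. fst b = G}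
        = Pair G ` ({K. (G, K) \<in> Rel V V} - NE V)" using G by auto
    moreover have "card (Pair G ` ({K. (G, K) \<in> Rel V V} - NE V)) = card ({K. (G, K) \<in> Rel V V} - NE V)"
      by (rule card_Pair_image)
    moreover have "card ({K. (G, K) \<in> Rel V V} - NE V) \<ge> card {K. (G, K) \<in> Rel V V} - card (NE V)"
      using fNE by (rule diff_card_le_card_Diff)
    moreover have "card {K. (G, K) \<in> Rel V V} = mV"
      using class_size[OF assms(1) Gg, of V] starV[of V] EdV mV_def by simp
    ultimately show "mV - card (NE V) \<le> card {b \<in> {(G, K) \<in> Rel V V. G \<in> NE V \<and> K \<notin> NE V}. fst b = G}"
      by simp
  qed
  have XV: "real a * (real mV - real a) \<le> real (XX V V)"
  proof (cases "a \<le> mV")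
    case True
    then have "real a * (real mV - real a) = real (a * (mV - a))" by (simp add: of_nat_diff)
    then show ?thesis using XVnat by (metis of_nat_le_iff)
  next
    case False
    then have "real a * (real mV - real a) \<le> 0" by (simp add: mult_nonneg_nonpos)
    then show ?thesis by (meson of_nat_0_le_iff order_trans)
  qed
  have single: "\<And>w. w \<in> V \<Longrightarrow> real (XX V {w}) / real (msz V {w}) = real a - b * real g"
  proof -
    fix w assume w: "w \<in> V"
    define mw where "mw = msz V {w}"
    define Bs where "Bs = {(G, K) \<in> Rel V {w}. G \<in> NE V \<and> K \<in> NE V}"
    define Xs where "Xs = {(G, K) \<in> Rel V {w}. G \<in> NE V \<and> K \<notin> NE V}"
    define As where "As = {(G, K) \<in> Rel V {w}. G \<in> NE V}"
    have fR: "finite (Rel V {w})" using finite_Rel[OF assms(1)] .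
    have cR: "card (Rel V {w}) = g * mw" unfolding g_def
    proof (rule card_fiber_eq[OF fR fG, where f = fst])
      show "fst ` Rel V {w} \<subseteq> graphs_on V" by (auto simp: Rel_def)
      fix G assume G: "G \<in> graphs_on V"
      have "{b \<in> Rel V {w}. fst b = G} = Pair G ` {K. (G, K) \<in> Rel V {w}}" by auto
      then show "card {b \<in> Rel V {w}. fst b = G} = mw"
        using class_size[OF assms(1) G swne[OF w]] mw_def by (simp add: card_Pair_image)
    qed
    have cA: "card As = a * mw" unfolding a_def
    proof (rule card_fiber_eq[where f = fst])
      show "finite As" by (rule finite_subset[OF _ fR]) (auto simp: As_def)
      show "finite (NE V)" by (rule fNE)
      show "fst ` As \<subseteq> NE V" by (auto simp: As_def)
      fix G assume G: "G \<in> NE V"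
      then have Gg: "G \<in> graphs_on V" by (auto simp: NE_def)
      have "{b \<in> As. fst b = G} = Pair G ` {K. (G, K) \<in> Rel V {w}}" using G by (auto simp: As_def)
      then show "card {b \<in> As. fst b = G} = mw"
        using class_size[OF assms(1) Gg swne[OF w]] mw_def by (simp add: card_Pair_image)
    qed
    have "As = Xs \<union> Bs" "Xs \<inter> Bs = {}" by (auto simp: As_def Xs_def Bs_def)
    moreover have "finite Xs" "finite Bs"
      by (rule finite_subset[OF _ fR], auto simp: Xs_def Bs_def)+
    ultimately have split: "card Xs + card Bs = a * mw" using cA by (simp add: card_Un_disjoint)
    have bdef: "b = real (card Bs) / real (g * mw)"
    proof -
      have "b = b_star_prob V V (V - {w})" using assms(4) w by simp
      also have "\<dots> = real (card Bs) / real (card (Rel V {w}))"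
      proof -
        have "{(G, G') \<in> parity_linked_space V V (V - {w}). \<not> even_degenerate V G \<and> \<not> even_degenerate V G'} = Bs"
          by (auto simp: pls_Rel Bs_def NE_def Rel_def)
        then show ?thesis by (simp add: b_star_prob_def pls_Rel)
      qed
      finally show ?thesis using cR by simp
    qed
    have mwpos: "real mw > 0" using msz_pos mw_def by simp
    have gpos: "real g > 0" using gm mpos by simp
    have "real (card Xs) = real a * real mw - real (card Bs)" using split
      by (metis add_diff_cancel_right' of_nat_add of_nat_mult)
    moreover have "real (card Bs) = b * real g * real mw" using bdef mwpos gpos by (simp add: field_simps)
    ultimately have "real (card Xs) / real mw = real a - b * real g" using mwpos by (simp add: field_simps)
    then show "real (XX V {w}) / real (msz V {w}) = real a - b * real g"
      by (simp add: XX_def Xs_def mw_def)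
  qed
  have "real (XX V V) / real (msz V V) \<le> (\<Sum>w\<in>V. real (XX V {w}) / real (msz V {w}))"
    using sum_bound[OF assms(1) subset_refl Vne] .
  also have "\<dots> = (\<Sum>w\<in>V. real a - b * real g)" using single by simp
  also have "\<dots> = real n * (real a - b * real g)" using assms(2) by simp
  finally have up: "real (XX V V) / real mV \<le> real n * (real a - b * real g)" by (simp add: mV_def)
  have low: "real a * (real mV - real a) / real mV \<le> real (XX V V) / real mV"
    using XV mpos by (simp add: divide_right_mono)
  have key: "real a * (real mV - real a) / real mV \<le> real n * (real a - b * (2 * real mV))"
    using low up gm by simp
  have npos: "real n > 0" using assms(3) by simp
  define A where "A = real a"
  define m where "m = real mV"
  define N where "N = real n"
  have key': "A * (m - A) / m \<le> N * (A - b * (2 * m))" using key A_def m_def N_def by simp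
  have mp: "m > 0" using mpos m_def by simp
  have Np: "N > 0" using npos N_def by simp
  have "A * (m - A) \<le> N * (A - b * (2 * m)) * m" using key' mp by (simp add: divide_le_eq)
  then have "b * (2 * m * m * N) \<le> N * A * m - A * (m - A)" by (simp add: algebra_simps)
  then have "b \<le> (N * A * m - A * (m - A)) / (2 * m * m * N)" using mp Np
    by (simp add: le_divide_eq mult_pos_pos)
  also have "\<dots> = A / (2 * m) - A / (2 * m) * (1 - 2 * (A / (2 * m))) / N"
    using mp Np by (simp add: field_simps)
  finally show ?thesis using gm A_def m_def N_def a_def g_def by simp
qed


lemma gmap_bij:
  assumes "bij_betw h A B"
  shows "bij_betw (gmap h) (graphs_on A) (graphs_on B)"
proof (rule bij_betw_byWitness[where f' = "gmap (inv_into A h)"])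
  have inj: "inj_on h A" and img: "h ` A = B" using assms by (auto simp: bij_betw_def)
  have bi: "bij_betw (inv_into A h) B A" using assms by (rule bij_betw_inv_into)
  have inj2: "inj_on (inv_into A h) B" and img2: "inv_into A h ` B = A" using bi by (auto simp: bij_betw_def)
  show "\<forall>E\<in>graphs_on A. gmap (inv_into A h) (gmap h E) = E" using gmap_inv[OF inj] by blast
  show "\<forall>E\<in>graphs_on B. gmap h (gmap (inv_into A h) E) = E" using gmap_inv2[OF img] by blast
  show "gmap h ` graphs_on A \<subseteq> graphs_on B" using gmap_graphs[OF inj] img by blast
  show "gmap (inv_into A h) ` graphs_on B \<subseteq> graphs_on A" using gmap_graphs[OF inj2] img2 by blast
qed

lemma NE_card:
  assumes "bij_betw h A B"
  shows "card (NE A) = card (NE B)" "card (graphs_on A) = card (graphs_on B)"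
proof -
  have b: "bij_betw (gmap h) (graphs_on A) (graphs_on B)" using assms by (rule gmap_bij)
  have "bij_betw (gmap h) (NE A) (NE B)"
    unfolding NE_def using ED_gmap_iff[OF assms] by (intro bij_betw_Collect[OF b]) auto
  then show "card (NE A) = card (NE B)" by (rule bij_betw_same_card)
  show "card (graphs_on A) = card (graphs_on B)" using b by (rule bij_betw_same_card)
qed

theorem mainTheorem16:
  fixes n :: nat and V V' S :: "'a set"
  assumes "n \<ge> 2"
    and "finite V" and "finite V'"
    and "card V = 1 + (n - 1)" and "card V' = 1 + (n - 1)"
    and "S \<subseteq> V \<inter> V'" and "card S = n - 1"
  shows "b_star_prob V V' S \<le> c_prob n - c_prob n * (1 - 2 * c_prob n) / real n"
proof -
  have cV: "card V = n" "card V' = n" using assms(1,4,5) by auto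
  have SV: "S \<subseteq> V" "S \<subseteq> V'" using assms(6) by auto
  have fS: "finite S" using SV(1) assms(2) by (rule finite_subset)
  have "card (V - S) = 1" using card_Diff_subset[OF fS SV(1)] cV assms(7,1) by simp
  then obtain v where v: "V - S = {v}" by (rule card_1_singletonE)
  have "card (V' - S) = 1" using card_Diff_subset[OF fS SV(2)] cV assms(7,1) by simp
  then obtain v' where v': "V' - S = {v'}" by (rule card_1_singletonE)
  have Vv: "V = insert v S" "v \<notin> S" using v SV by auto
  have Vv': "V' = insert v' S" "v' \<notin> S" using v' SV by auto
  define f' where "f' = (\<lambda>x. if x = v' then v else x)"
  have bf': "bij_betw f' V' V"
    unfolding bij_betw_def inj_on_def f'_def using Vv Vv' by auto
  have b1: "b_star_prob V V' S = b_star_prob V V S"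
    using b_star_transport[OF bij_betw_id bf' assms(6)] f'_def Vv' by simp
  have bw: "\<forall>w\<in>V. b_star_prob V V (V - {w}) = b_star_prob V V' S"
  proof
    fix w assume w: "w \<in> V"
    define t where "t = (\<lambda>x. if x = v then w else if x = w then v else x)"
    have bt: "bij_betw t V V"
      unfolding bij_betw_def inj_on_def t_def using Vv w by auto
    have tS: "t ` S = V - {w}"
    proof (cases "w = v")
      case True
      then show ?thesis using Vv by (auto simp: t_def)
    next
      case False
      then have "w \<in> S" using w Vv by auto
      then show ?thesis using Vv False by (auto simp: t_def image_iff)
    qed
    have "b_star_prob V V S = b_star_prob V V (t ` S)"
      using b_star_transport[OF bt bt] SV by simp
    then show "b_star_prob V V (V - {w}) = b_star_prob V V' S" using tS b1 by simp
  qed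
  obtain h where h: "bij_betw h {0..<card V} V" using ex_bij_betw_nat_finite[OF assms(2)] by blast
  have h': "bij_betw h {..<n} V" using h cV by (simp add: atLeast0LessThan)
  have cp: "c_prob n = real (card (NE V)) / real (card (graphs_on V))"
    unfolding c_prob_def using NE_card[OF h'] by (simp add: NE_def)
  show ?thesis using core[OF assms(2) cV(1) assms(1) bw] cp by simp
qed


end
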